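(* Suppose each firm $i$'s payoff is $$\pi_i(\boldsymbol{x})=\alpha_0+\alpha_1x_i-\frac{\alpha_2}{2}x_i^2+\beta_1\sum_{j\ne i}x_j-\beta_2\sum_{j\ne i}x_ix_j,$$ equilibria are interior (characterized by first-order conditions), and consider two-period sequential games $\boldsymbol{n}=(n_1,n_2)$ with $n_1\ge1$, $n_2\ge0$. Suppose the Stackelberg independence property is non-trivially satisfied for all $(n_1,n_2)$, i.e. the total equilibrium quantity of the period-1 firms is independent of $n_2$ for every $n_1$ and is not identically zero (with $\alpha_1\neq 0$ and $\alpha_2\ne\beta_2$). Then $\alpha_2=2\beta_2$ and $\beta_1=0$, so that (up to the irrelevant constant $\alpha_0$) $\pi_i(\boldsymbol{x})=x_i\,a(\overline{X}_c-X)$ with $a=\beta_2$, $\overline{X}_c=\alpha_1/\beta_2$, and $X=\sum_jx_j$.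
   Context: Two-period sequential game: the $n_1$ firms of period 1 choose quantities simultaneously; the $n_2$ firms of period 2 observe the period-1 total $X_1$ and then choose simultaneously; equilibrium is subgame perfect. Stackelberg independence here means the period-1 firms' equilibrium choices do not depend on $n_2$. *)

theory Defs
  imports Complex_Main
begin

text \<open>Firms are indexed by naturals; in the game (n1,n2) the period-1 firms are
  0..<n1 and the period-2 firms are n1..<n1+n2. A quantity profile is nat => real.\<close>

definition payoff :: "real \<Rightarrow> real \<Rightarrow> real \<Rightarrow> real \<Rightarrow> real \<Rightarrow> nat \<Rightarrow> (nat \<Rightarrow> real) \<Rightarrow> nat \<Rightarrow> real" where
  "payoff a0 a1 a2 b1 b2 N x i =
     a0 + a1 * x i - a2 / 2 * (x i)^2
     + b1 * (\<Sum>j\<in>{..<N} - {i}. x j)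
     - b2 * (\<Sum>j\<in>{..<N} - {i}. x i * x j)"

definition profile :: "nat \<Rightarrow> (nat \<Rightarrow> real) \<Rightarrow> (nat \<Rightarrow> real) \<Rightarrow> nat \<Rightarrow> real" where
  "profile n1 x1 y = (\<lambda>j. if j < n1 then x1 j else y j)"

definition stage2_eq :: "real \<Rightarrow> real \<Rightarrow> real \<Rightarrow> real \<Rightarrow> real \<Rightarrow> nat \<Rightarrow> nat \<Rightarrow> (nat \<Rightarrow> real) \<Rightarrow> bool" where
  "stage2_eq a0 a1 a2 b1 b2 n1 n2 x \<longleftrightarrow>
     (\<forall>k\<in>{n1..<n1+n2}.
        ((\<lambda>t. payoff a0 a1 a2 b1 b2 (n1+n2) (x(k:=t)) k) has_real_derivative 0) (at (x k)))"

text \<open>Subgame perfect equilibrium (interior, first-order conditions): sigma is the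
  period-2 strategy, mapping the observed period-1 total X1 to period-2 quantities;
  x1 gives the period-1 quantities.\<close>
definition spe :: "real \<Rightarrow> real \<Rightarrow> real \<Rightarrow> real \<Rightarrow> real \<Rightarrow> nat \<Rightarrow> nat \<Rightarrow> (real \<Rightarrow> nat \<Rightarrow> real) \<Rightarrow> (nat \<Rightarrow> real) \<Rightarrow> bool" where
  "spe a0 a1 a2 b1 b2 n1 n2 \<sigma> x1 \<longleftrightarrow>
     (\<forall>z. stage2_eq a0 a1 a2 b1 b2 n1 n2 (profile n1 z (\<sigma> (\<Sum>j<n1. z j)))) \<and>
     (\<forall>i<n1. ((\<lambda>t. payoff a0 a1 a2 b1 b2 (n1+n2)
                     (profile n1 (x1(i:=t)) (\<sigma> (\<Sum>j<n1. (x1(i:=t)) j))) i)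
               has_real_derivative 0) (at (x1 i)))"

end

theory Submission
  imports Defs
begin

lemma payoff_upd:
  "payoff a0 a1 a2 b1 b2 N (x(k:=t)) k =
     a0 + a1 * t - a2 / 2 * t^2 + b1 * (\<Sum>j\<in>{..<N} - {k}. x j) - b2 * (t * (\<Sum>j\<in>{..<N} - {k}. x j))"
proof -
  have "(\<Sum>j\<in>{..<N} - {k}. (x(k:=t)) j) = (\<Sum>j\<in>{..<N} - {k}. x j)"
    by (rule sum.cong) auto
  moreover have "(\<Sum>j\<in>{..<N} - {k}. (x(k:=t)) k * (x(k:=t)) j) = t * (\<Sum>j\<in>{..<N} - {k}. x j)"
    by (simp add: sum_distrib_left)
  ultimately show ?thesis by (simp add: payoff_def)
qed

lemma own_deriv:
  "((\<lambda>t. payoff a0 a1 a2 b1 b2 N (x(k:=t)) k) has_real_derivative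
      (a1 - a2 * x k - b2 * (\<Sum>j\<in>{..<N} - {k}. x j))) (at (x k))"
  unfolding payoff_upd
  by (rule derivative_eq_intros refl | simp)+

lemma stage2_foc:
  assumes "stage2_eq a0 a1 a2 b1 b2 n1 n2 p" "k \<in> {n1..<n1+n2}"
  shows "a1 - (a2 - b2) * p k - b2 * (\<Sum>j<n1+n2. p j) = 0"
proof -
  have d: "((\<lambda>t. payoff a0 a1 a2 b1 b2 (n1+n2) (p(k:=t)) k) has_real_derivative 0) (at (p k))"
    using assms unfolding stage2_eq_def by blast
  have "a1 - a2 * p k - b2 * (\<Sum>j\<in>{..<n1+n2} - {k}. p j) = 0"
    using DERIV_unique[OF own_deriv d] .
  moreover have "(\<Sum>j\<in>{..<n1+n2} - {k}. p j) = (\<Sum>j<n1+n2. p j) - p k"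
    using assms(2) by (simp add: sum_diff1)
  ultimately show ?thesis by (simp add: algebra_simps)
qed

lemma sum_profile:
  "(\<Sum>j<n1+n2. profile n1 z y j) = (\<Sum>j<n1. z j) + (\<Sum>j\<in>{n1..<n1+n2}. y j)"
proof -
  have "{..<n1+n2} = {..<n1} \<union> {n1..<n1+n2}" by auto
  hence "(\<Sum>j<n1+n2. profile n1 z y j) = (\<Sum>j<n1. profile n1 z y j) + (\<Sum>j\<in>{n1..<n1+n2}. profile n1 z y j)"
    using sum.union_disjoint[of "{..<n1}" "{n1..<n1+n2}" "profile n1 z y"]
    by (simp add: disjoint_iff)
  also have "(\<Sum>j<n1. profile n1 z y j) = (\<Sum>j<n1. z j)"
    by (rule sum.cong) (auto simp: profile_def)
  also have "(\<Sum>j\<in>{n1..<n1+n2}. profile n1 z y j) = (\<Sum>j\<in>{n1..<n1+n2}. y j)"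
    by (rule sum.cong) (auto simp: profile_def)
  finally show ?thesis .
qed

lemma stage2_profile:
  assumes "stage2_eq a0 a1 a2 b1 b2 n1 n2 (profile n1 z y)"
  shows "(\<forall>k\<in>{n1..<n1+n2}. a1 - (a2 - b2) * y k
            - b2 * ((\<Sum>j<n1. z j) + (\<Sum>j\<in>{n1..<n1+n2}. y j)) = 0)
     \<and> (a2 - b2 + real n2 * b2) * (\<Sum>j\<in>{n1..<n1+n2}. y j) = real n2 * (a1 - b2 * (\<Sum>j<n1. z j))"
proof -
  define X where "X = (\<Sum>j<n1. z j)"
  define Y where "Y = (\<Sum>j\<in>{n1..<n1+n2}. y j)"
  have k: "\<forall>k\<in>{n1..<n1+n2}. a1 - (a2 - b2) * y k - b2 * (X + Y) = 0"
  proof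
    fix k assume k: "k \<in> {n1..<n1+n2}"
    have "a1 - (a2 - b2) * profile n1 z y k - b2 * (\<Sum>j<n1+n2. profile n1 z y j) = 0"
      using stage2_foc[OF assms k] .
    moreover have "(\<Sum>j<n1+n2. profile n1 z y j) = X + Y"
      by (simp only: sum_profile X_def Y_def)
    moreover have "profile n1 z y k = y k" using k by (simp add: profile_def)
    ultimately show "a1 - (a2 - b2) * y k - b2 * (X + Y) = 0"
      by simp
  qed
  have "(\<Sum>k\<in>{n1..<n1+n2}. a1 - (a2 - b2) * y k - b2 * (X + Y)) = 0"
    using k by simp
  hence "real n2 * a1 - (a2 - b2) * Y - real n2 * b2 * (X + Y) = 0"
    by (simp add: sum_subtractf sum_distrib_left[symmetric] Y_def)
  hence "(a2 - b2 + real n2 * b2) * Y = real n2 * (a1 - b2 * X)"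
    by (simp add: algebra_simps)
  with k show ?thesis by (simp add: X_def Y_def)
qed

lemma D_ne:
  assumes "spe a0 a1 a2 b1 b2 n1 n2 \<sigma> x1" "a1 \<noteq> 0" "a2 \<noteq> b2"
  shows "a2 - b2 + real n2 * b2 \<noteq> 0"
proof
  assume D: "a2 - b2 + real n2 * b2 = 0"
  have "stage2_eq a0 a1 a2 b1 b2 n1 n2 (profile n1 (\<lambda>_. 0) (\<sigma> (\<Sum>j<n1. (\<lambda>_. 0::real) j)))"
    using assms(1) unfolding spe_def by blast
  from stage2_profile[OF this] D have "real n2 * a1 = 0" by simp
  with assms have "n2 = 0" by simp
  with D assms show False by simp
qed

lemma payoff_alt:
  assumes "i < N"
  shows "payoff a0 a1 a2 b1 b2 N p i = a0 + a1 * p i - a2 / 2 * (p i)^2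
     + b1 * ((\<Sum>j<N. p j) - p i) - b2 * (p i * ((\<Sum>j<N. p j) - p i))"
proof -
  have "(\<Sum>j\<in>{..<N} - {i}. p j) = (\<Sum>j<N. p j) - p i"
    using assms by (simp add: sum_diff1)
  moreover have "(\<Sum>j\<in>{..<N} - {i}. p i * p j) = p i * (\<Sum>j\<in>{..<N} - {i}. p j)"
    by (simp add: sum_distrib_left)
  ultimately show ?thesis by (simp add: payoff_def)
qed

lemma sum_upd:
  fixes n1 :: nat and x1 :: "nat \<Rightarrow> real"
  assumes "i < n1"
  shows "(\<Sum>j<n1. (x1(i:=t)) j) = (\<Sum>j<n1. x1 j) - x1 i + t"
proof -
  have "(\<Sum>j<n1. (x1(i:=t)) j) = (\<Sum>j\<in>{..<n1} - {i}. (x1(i:=t)) j) + t"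
  proof -
    have "i \<in> {..<n1}" using assms by simp
    from sum.remove[OF finite_lessThan this, of "x1(i:=t)"] show ?thesis
      by (metis add.commute fun_upd_same)
  qed
  also have "(\<Sum>j\<in>{..<n1} - {i}. (x1(i:=t)) j) = (\<Sum>j\<in>{..<n1} - {i}. x1 j)"
    by (rule sum.cong) auto
  also have "\<dots> = (\<Sum>j<n1. x1 j) - x1 i" using assms by (simp add: sum_diff1)
  finally show ?thesis .
qed

lemma period1_foc:
  assumes spe: "spe a0 a1 a2 b1 b2 n1 n2 \<sigma> x1" and i: "i < n1"
    and a1: "a1 \<noteq> 0" and a2: "a2 \<noteq> b2"
  defines "D \<equiv> a2 - b2 + real n2 * b2"
  defines "X \<equiv> (\<Sum>j<n1. x1 j)"
  shows "a1 - a2 * x1 i + b1 * (- real n2 * b2 / D)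
           - b2 * (X + real n2 * (a1 - b2 * X) / D - x1 i)
           - b2 * (x1 i * (- real n2 * b2 / D)) = 0"
proof -
  have Dne: "D \<noteq> 0" using D_ne[OF spe a1 a2] by (simp add: D_def)
  define R where "R = X - x1 i"
  define Q where "Q = (\<lambda>t. (R + t) + real n2 * (a1 - b2 * (R + t)) / D)"
  have eqf: "(\<lambda>t. payoff a0 a1 a2 b1 b2 (n1+n2)
                (profile n1 (x1(i:=t)) (\<sigma> (\<Sum>j<n1. (x1(i:=t)) j))) i)
           = (\<lambda>t. a0 + a1 * t - a2 / 2 * t^2 + b1 * (Q t - t) - b2 * (t * (Q t - t)))"
  proof
    fix t
    define z where "z = x1(i:=t)"
    define y where "y = \<sigma> (\<Sum>j<n1. z j)"
    have Xt: "(\<Sum>j<n1. z j) = R + t" unfolding z_def sum_upd[OF i] R_def X_def by simp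
    have "stage2_eq a0 a1 a2 b1 b2 n1 n2 (profile n1 z y)"
      using spe unfolding spe_def y_def by blast
    from stage2_profile[OF this] have
      "D * (\<Sum>j\<in>{n1..<n1+n2}. y j) = real n2 * (a1 - b2 * (R + t))"
      by (simp add: D_def Xt)
    hence Y: "(\<Sum>j\<in>{n1..<n1+n2}. y j) = real n2 * (a1 - b2 * (R + t)) / D"
      proof -
      have "(\<Sum>j\<in>{n1..<n1+n2}. y j) = D * (\<Sum>j\<in>{n1..<n1+n2}. y j) / D" using Dne by simp
      also note \<open>D * _ = _\<close>
      finally show ?thesis .
    qed
    have P: "(\<Sum>j<n1+n2. profile n1 z y j) = Q t"
      by (simp add: sum_profile Xt Y Q_def)
    have pi: "profile n1 z y i = t" using i by (simp add: profile_def z_def)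
    show "payoff a0 a1 a2 b1 b2 (n1+n2) (profile n1 (x1(i:=t)) (\<sigma> (\<Sum>j<n1. (x1(i:=t)) j))) i
        = a0 + a1 * t - a2 / 2 * t^2 + b1 * (Q t - t) - b2 * (t * (Q t - t))"
      using i unfolding z_def[symmetric] y_def[symmetric]
      by (simp add: payoff_alt P pi)
  qed
  define c1 where "c1 = - real n2 * b2 / D"
  define c0 where "c0 = R + real n2 * (a1 - b2 * R) / D"
  have Qeq: "\<And>t. Q t - t = c0 + c1 * t"
    unfolding Q_def c0_def c1_def using Dne by (simp add: field_simps)
  have d0: "((\<lambda>t. a0 + a1 * t - a2 / 2 * t^2 + b1 * (c0 + c1 * t) - b2 * (t * (c0 + c1 * t)))
             has_real_derivative 0) (at (x1 i))"
  proof -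
    have "((\<lambda>t. payoff a0 a1 a2 b1 b2 (n1+n2)
                (profile n1 (x1(i:=t)) (\<sigma> (\<Sum>j<n1. (x1(i:=t)) j))) i) has_real_derivative 0) (at (x1 i))"
      using spe i unfolding spe_def by blast
    thus ?thesis by (simp only: eqf Qeq)
  qed
  have d1: "((\<lambda>t. a0 + a1 * t - a2 / 2 * t^2 + b1 * (c0 + c1 * t) - b2 * (t * (c0 + c1 * t)))
             has_real_derivative
             (a1 - a2 * x1 i + b1 * c1 - b2 * (c0 + c1 * x1 i) - b2 * (x1 i * c1))) (at (x1 i))"
    apply (rule derivative_eq_intros refl)+
    apply (simp add: algebra_simps)
    done
  have "Q (x1 i) - x1 i = X + real n2 * (a1 - b2 * X) / D - x1 i" by (simp add: Q_def R_def)
  hence "c0 + c1 * x1 i = X + real n2 * (a1 - b2 * X) / D - x1 i" by (simp add: Qeq)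
  with DERIV_unique[OF d1 d0] show ?thesis by (simp add: c1_def)
qed

lemma summed:
  assumes spe: "spe a0 a1 a2 b1 b2 n1 n2 \<sigma> x1"
    and a1: "a1 \<noteq> 0" and a2: "a2 \<noteq> b2"
  shows "real n1 * (a1 * (a2 - b2) - b1 * b2 * real n2) =
         (\<Sum>j<n1. x1 j) * ((a2 - b2)^2 + real n1 * b2 * (a2 - b2) + real n2 * b2 * (a2 - b2 - b2))"
proof -
  define D where "D = a2 - b2 + real n2 * b2"
  define X where "X = (\<Sum>j<n1. x1 j)"
  have Dne: "D \<noteq> 0" using D_ne[OF spe a1 a2] by (simp add: D_def)
  define c where "c = - real n2 * b2 / D"
  define K where "K = X + real n2 * (a1 - b2 * X) / D"
  define \<alpha> where "\<alpha> = a1 + b1 * c - b2 * K"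
  define \<beta> where "\<beta> = b2 - a2 - b2 * c"
  have foc: "\<alpha> + \<beta> * x1 i = 0" if "i < n1" for i
  proof -
    have "a1 - a2 * x1 i + b1 * (- real n2 * b2 / D)
           - b2 * (X + real n2 * (a1 - b2 * X) / D - x1 i)
           - b2 * (x1 i * (- real n2 * b2 / D)) = 0"
      using period1_foc[OF spe that a1 a2] by (simp add: D_def X_def)
    moreover have "a1 - a2 * x1 i + b1 * (- real n2 * b2 / D)
           - b2 * (X + real n2 * (a1 - b2 * X) / D - x1 i)
           - b2 * (x1 i * (- real n2 * b2 / D)) = \<alpha> + \<beta> * x1 i"
      unfolding \<alpha>_def \<beta>_def c_def K_def by (simp add: algebra_simps)
    ultimately show ?thesis by simp
  qed
  have "(\<Sum>i<n1. \<alpha> + \<beta> * x1 i) = 0" using foc by simp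
  hence S: "real n1 * \<alpha> + \<beta> * X = 0"
    by (simp add: sum.distrib sum_distrib_left[symmetric] X_def)
  have cD: "c * D = - real n2 * b2" using Dne by (simp add: c_def)
  have KD: "K * D = X * D + real n2 * (a1 - b2 * X)" using Dne
    by (simp add: K_def field_simps)
  have "D * (real n1 * \<alpha> + \<beta> * X)
      = real n1 * (a1 * D + b1 * (c * D) - b2 * (K * D)) + ((b2 - a2) * D - b2 * (c * D)) * X"
    unfolding \<alpha>_def \<beta>_def by (simp add: algebra_simps)
  also have "\<dots> = real n1 * (a1 * D + b1 * (- real n2 * b2) - b2 * (X * D + real n2 * (a1 - b2 * X)))
       + ((b2 - a2) * D - b2 * (- real n2 * b2)) * X"
    by (simp only: cD KD)
  also have "\<dots> = real n1 * (a1 * (a2 - b2) - b1 * b2 * real n2) -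
         X * ((a2 - b2)^2 + real n1 * b2 * (a2 - b2) + real n2 * b2 * (a2 - b2 - b2))"
    unfolding D_def by (simp add: algebra_simps power2_eq_square)
  finally show ?thesis using S X_def by simp
qed

lemma key:
  fixes A B C E T :: real
  assumes "real u * A = T * C" "real u * (A - B) = T * (C + E)" "A \<noteq> 0" "u \<ge> 1"
  shows "A * E + B * C = 0"
proof -
  have T: "T \<noteq> 0" using assms by auto
  have TE: "T * E = - (real u * B)" using assms(1,2) by (simp add: algebra_simps)
  have "T * (A * E + B * C) = A * (T * E) + B * (T * C)" by (simp add: algebra_simps)
  also have "\<dots> = 0" using TE assms(1)[symmetric] by (simp add: algebra_simps)
  finally show ?thesis using T by simp
qed

theorem proposition5:
  fixes a0 a1 a2 b1 b2 :: real
  assumes a1: "a1 \<noteq> 0" and a2: "a2 \<noteq> b2" and b2: "b2 \<noteq> 0"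
    and exist: "\<forall>n1 n2. n1 \<ge> 1 \<longrightarrow> (\<exists>\<sigma> x1. spe a0 a1 a2 b1 b2 n1 n2 \<sigma> x1)"
    and indep: "\<exists>T :: nat \<Rightarrow> real.
                  (\<forall>n1 n2 \<sigma> x1. n1 \<ge> 1 \<longrightarrow> spe a0 a1 a2 b1 b2 n1 n2 \<sigma> x1 \<longrightarrow>
                      (\<Sum>i<n1. x1 i) = T n1)
                  \<and> (\<exists>n1\<ge>1. T n1 \<noteq> 0)"
  shows "a2 = 2 * b2 \<and> b1 = 0 \<and>
         (\<forall>N x i. i < N \<longrightarrow>
            payoff a0 a1 a2 b1 b2 N x i = a0 + x i * (b2 * (a1 / b2 - (\<Sum>j<N. x j))))"
proof -
  obtain T where T: "\<And>n1 n2 \<sigma> x1. n1 \<ge> 1 \<Longrightarrow> spe a0 a1 a2 b1 b2 n1 n2 \<sigma> x1 \<Longrightarrow>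
                      (\<Sum>i<n1. x1 i) = T n1"
    using indep by blast
  define d where "d = a2 - b2"
  have dne: "d \<noteq> 0" using a2 by (simp add: d_def)
  have eq: "real n1 * (a1 * d - b1 * b2 * real n2) =
         T n1 * (d^2 + real n1 * b2 * d + real n2 * b2 * (d - b2))" if n1: "n1 \<ge> 1" for n1 n2
  proof -
    obtain \<sigma> x1 where s: "spe a0 a1 a2 b1 b2 n1 n2 \<sigma> x1" using exist n1 by blast
    show ?thesis using summed[OF s a1 a2] T[OF n1 s] by (simp add: d_def)
  qed
  have K: "(a1 * d) * (b2 * (d - b2)) + (b1 * b2) * (d^2 + real u * b2 * d) = 0" if "u \<ge> 1" for u
  proof (rule key[OF _ _ _ that, where T = "T u"])
    show "real u * (a1 * d) = T u * (d\<^sup>2 + real u * b2 * d)" using eq[OF that, of 0] by simp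
    show "real u * (a1 * d - b1 * b2) = T u * (d\<^sup>2 + real u * b2 * d + b2 * (d - b2))"
      using eq[OF that, of 1] by simp
    show "a1 * d \<noteq> 0" using a1 dne by simp
  qed
  have "b1 * b2 * b2 * d =
     ((a1 * d) * (b2 * (d - b2)) + (b1 * b2) * (d^2 + real 2 * b2 * d))
     - ((a1 * d) * (b2 * (d - b2)) + (b1 * b2) * (d^2 + real 1 * b2 * d))"
    by (simp add: algebra_simps)
  also have "\<dots> = 0" using K[of 1] K[of 2] by simp
  finally have "b1 * b2 * b2 * d = 0" .
  hence b1: "b1 = 0" using b2 dne by simp
  hence "a1 * d * b2 * (d - b2) = 0" using K[of 1] by (simp add: algebra_simps)
  hence "d = b2" using a1 b2 dne by simp
  hence a2': "a2 = 2 * b2" by (simp add: d_def)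
  have "payoff a0 a1 a2 b1 b2 N x i = a0 + x i * (b2 * (a1 / b2 - (\<Sum>j<N. x j)))" if "i < N" for N x i
  proof -
    have "payoff a0 a1 a2 b1 b2 N x i = a0 + a1 * x i - b2 * (x i)^2 - b2 * (x i * ((\<Sum>j<N. x j) - x i))"
      using payoff_alt[OF that] b1 a2' by simp
    also have "\<dots> = a0 + x i * (b2 * (a1 / b2 - (\<Sum>j<N. x j)))"
      using b2 by (simp add: algebra_simps power2_eq_square)
    finally show ?thesis .
  qed
  with a2' b1 show ?thesis by blast
qed

end
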